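(* There is a constant $C>0$ depending only on $\lambda$ such that: (i) for all $m<n$, $Q\in\mathcal D_m$, $R\in\mathcal D_n$ with $R\subset Q$, one has $|S_R-S_Q-S_{Q,R}|\le C\,a_m$; (ii) for all $m\le n$, $Q\in\mathcal D_m$, $\tilde R\in\mathcal D_n$, $R\in\mathcal D_{n+1}$ with $R\subset\tilde R\subset Q$, one has $|S_{Q,R}-S_{Q,\tilde R}|\le C\,a_n$.
   Context: Fix $(\lambda_n)_{n\ge1}$ and $\lambda$ with $\frac14\le\lambda_n\le\lambda<\frac12$. Starting from $Q_0=[0,1]^2\subset\mathbb{C}$, inductively replace each square of generation $n-1$ by its $4$ axis-parallel corner subsquares of side ratio $\lambda_n$; generation $n$ consists of $4^n$ closed squares of side $s_n=\lambda_1\cdots\lambda_n$ ($s_0=1$), forming the family $\mathcal D_n$. $K=\bigcap_n\bigcup_{Q\in\mathcal D_n}Q$, $\mu$ is the Borel probability measure on $K$ giving mass $4^{-n}$ to each $Q\in\mathcal D_n$, and $a_n=1/(4^ns_n)$. Let $C(z)=1/z$. For $Q\in\mathcal D_n$ set $S_Q=\frac{1}{\mu(Q)}\int_Q\int_{K\setminus Q}C(z-y)\,d\mu(y)\,d\mu(z)$. For $R\subset Q$ with $Q,R\in\mathcal D$ define the relative martingale $S_{Q,R}=\frac{1}{\mu(R)}\int_R\int_{Q\setminus R}C(z-y)\,d\mu(y)\,d\mu(z)$ (so $S_{Q,Q}=0$). *)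

theory Defs
  imports "HOL-Probability.Probability"
begin

definition side :: "(nat \<Rightarrow> real) \<Rightarrow> nat \<Rightarrow> real" where
  "side lam n = (\<Prod>k\<in>{1..n}. lam k)"

definition corner_off :: "nat \<Rightarrow> complex" where
  "corner_off d = (if d = 0 then 0 else if d = 1 then 1 else if d = 2 then \<i> else 1 + \<i>)"

text \<open>A square of generation n is addressed by a word w of n digits in {0..3};
  digit k (0-based) selects the corner subsquare at generation k+1.\<close>
definition sq_corner :: "(nat \<Rightarrow> real) \<Rightarrow> nat list \<Rightarrow> complex" where
  "sq_corner lam w = (\<Sum>k<length w. complex_of_real (side lam k - side lam (Suc k)) * corner_off (w ! k))"

definition sq :: "(nat \<Rightarrow> real) \<Rightarrow> nat list \<Rightarrow> complex set" where
  "sq lam w = {sq_corner lam w + complex_of_real x + \<i> * complex_of_real y | x y.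
                 0 \<le> x \<and> x \<le> side lam (length w) \<and> 0 \<le> y \<and> y \<le> side lam (length w)}"

definition words :: "nat \<Rightarrow> nat list set" where
  "words n = {w. length w = n \<and> set w \<subseteq> {0..<4}}"

definition gen :: "(nat \<Rightarrow> real) \<Rightarrow> nat \<Rightarrow> complex set set" where
  "gen lam n = sq lam ` words n"

definition cantorK :: "(nat \<Rightarrow> real) \<Rightarrow> complex set" where
  "cantorK lam = (\<Inter>n. \<Union>(gen lam n))"

definition a_seq :: "(nat \<Rightarrow> real) \<Rightarrow> nat \<Rightarrow> real" where
  "a_seq lam n = 1 / (4 ^ n * side lam n)"

definition cauchy_kernel :: "complex \<Rightarrow> complex" where
  "cauchy_kernel z = 1 / z"

definition S_mart :: "complex measure \<Rightarrow> complex set \<Rightarrow> complex set \<Rightarrow> complex" where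
  "S_mart \<mu> K Q = (1 / measure \<mu> Q) *\<^sub>R
     (LINT z:Q|\<mu>. (LINT y:(K - Q)|\<mu>. cauchy_kernel (z - y)))"

definition S_rel :: "complex measure \<Rightarrow> complex set \<Rightarrow> complex set \<Rightarrow> complex" where
  "S_rel \<mu> Q R = (1 / measure \<mu> R) *\<^sub>R
     (LINT z:R|\<mu>. (LINT y:(Q - R)|\<mu>. cauchy_kernel (z - y)))"

definition cantor_measure :: "(nat \<Rightarrow> real) \<Rightarrow> complex measure \<Rightarrow> bool" where
  "cantor_measure lam \<mu> \<longleftrightarrow> prob_space \<mu> \<and> sets \<mu> = sets borel \<and>
     emeasure \<mu> (cantorK lam) = 1 \<and>
     (\<forall>n. \<forall>Q\<in>gen lam n. measure \<mu> Q = 1 / 4 ^ n)"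

end

theory Submission
  imports Defs
begin


locale lamloc =
  fixes lam :: "nat \<Rightarrow> real" and L :: real
  assumes lb: "\<And>n. n \<ge> 1 \<Longrightarrow> 1/4 \<le> lam n" and ub: "\<And>n. n \<ge> 1 \<Longrightarrow> lam n \<le> L"
    and Lhalf: "L < 1/2"
begin

lemma side_0[simp]: "side lam 0 = 1" by (simp add: side_def)

lemma side_Suc: "side lam (Suc j) = side lam j * lam (Suc j)"
  by (simp add: side_def prod.nat_ivl_Suc' mult.commute)

lemma side_pos: "side lam j > 0"
proof (induction j)
  case 0 then show ?case by simp
next
  case (Suc j)
  have "lam (Suc j) > 0" using lb[of "Suc j"] by simp
  then show ?case using Suc by (simp add: side_Suc)
qed

lemma side_Suc_le: "side lam (Suc j) \<le> side lam j"
proof -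
  have "lam (Suc j) \<le> 1" using ub[of "Suc j"] Lhalf by simp
  then show ?thesis using side_pos[of j] by (simp add: side_Suc mult_left_le)
qed

lemma side_mono: "j \<le> n \<Longrightarrow> side lam n \<le> side lam j"
  by (induction n rule: dec_induct) (auto intro: order_trans[OF side_Suc_le])

lemma side_ge: "side lam (Suc j) \<ge> side lam j / 4"
  using lb[of "Suc j"] side_pos[of j] by (simp add: side_Suc)

lemma side_geo: "j \<le> n \<Longrightarrow> side lam n \<le> side lam j * L ^ (n - j)"
proof (induction n rule: dec_induct)
  case base then show ?case by simp
next
  case (step n)
  have "side lam (Suc n) = side lam n * lam (Suc n)" by (rule side_Suc)
  also have "\<dots> \<le> side lam j * L ^ (n - j) * L"
    using step side_pos[of n] ub[of "Suc n"] lb[of "Suc n"]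
    by (intro mult_mono) auto
  also have "\<dots> = side lam j * L ^ (Suc n - j)" using step by (simp add: Suc_diff_le)
  finally show ?case .
qed

definition delta where "delta = 1 - 2 * L"
lemma delta_pos: "delta > 0" using Lhalf by (simp add: delta_def)

lemma sep: "side lam j - 2 * side lam (Suc j) \<ge> delta * side lam j"
  using ub[of "Suc j"] side_pos[of j] by (simp add: side_Suc delta_def algebra_simps)

lemma corner_snoc: "sq_corner lam (u @ [d]) = sq_corner lam u +
   complex_of_real (side lam (length u) - side lam (Suc (length u))) * corner_off d"
  unfolding sq_corner_def by (simp add: nth_append)

lemma sq_iff: "p \<in> sq lam w \<longleftrightarrow>
   0 \<le> Re p - Re (sq_corner lam w) \<and> Re p - Re (sq_corner lam w) \<le> side lam (length w) \<and>
   0 \<le> Im p - Im (sq_corner lam w) \<and> Im p - Im (sq_corner lam w) \<le> side lam (length w)"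
proof
  assume "p \<in> sq lam w" then show "0 \<le> Re p - Re (sq_corner lam w) \<and> Re p - Re (sq_corner lam w) \<le> side lam (length w) \<and>
   0 \<le> Im p - Im (sq_corner lam w) \<and> Im p - Im (sq_corner lam w) \<le> side lam (length w)"
    unfolding sq_def by auto
next
  assume H: "0 \<le> Re p - Re (sq_corner lam w) \<and> Re p - Re (sq_corner lam w) \<le> side lam (length w) \<and>
   0 \<le> Im p - Im (sq_corner lam w) \<and> Im p - Im (sq_corner lam w) \<le> side lam (length w)"
  have "p = sq_corner lam w + complex_of_real (Re p - Re (sq_corner lam w)) + \<i> * complex_of_real (Im p - Im (sq_corner lam w))"
    by (simp add: complex_eq_iff)
  then show "p \<in> sq lam w" unfolding sq_def using H by blast
qed

lemma off_cases: "corner_off d \<in> {0, 1, \<i>, 1 + \<i>}"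
  by (simp add: corner_off_def)

lemma sq_snoc_sub: "sq lam (u @ [d]) \<subseteq> sq lam u"
proof
  fix p assume p: "p \<in> sq lam (u @ [d])"
  let ?t = "side lam (length u) - side lam (Suc (length u))"
  have t: "?t \<ge> 0" using side_Suc_le[of "length u"] by simp
  have a: "0 \<le> Re (corner_off d) \<and> Re (corner_off d) \<le> 1 \<and> 0 \<le> Im (corner_off d) \<and> Im (corner_off d) \<le> 1"
    using off_cases[of d] by auto
  have ra: "0 \<le> ?t * Re (corner_off d) \<and> ?t * Re (corner_off d) \<le> ?t"
    using a t by (simp add: mult_left_le)
  have ia: "0 \<le> ?t * Im (corner_off d) \<and> ?t * Im (corner_off d) \<le> ?t"
    using a t by (simp add: mult_left_le)
  show "p \<in> sq lam u" using p ra ia unfolding sq_iff corner_snoc by auto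
qed

lemma aux_sep:
  fixes t s a x y A :: real
  assumes "\<bar>a\<bar> = 1" "A = t * a + (x - y)" "0 \<le> x" "x \<le> s" "0 \<le> y" "y \<le> s" "t \<ge> 0"
  shows "\<bar>A\<bar> \<ge> t - s"
proof -
  have "a = 1 \<or> a = -1" using assms(1) by (auto simp: abs_if split: if_splits)
  then show ?thesis using assms(2-7) by auto
qed

lemma sibling_dist:
  assumes "d \<noteq> e" "d < 4" "e < 4" "p \<in> sq lam (u @ [d])" "q \<in> sq lam (u @ [e])"
  shows "cmod (p - q) \<ge> delta * side lam (length u)"
proof -
  let ?t = "side lam (length u) - side lam (Suc (length u))"
  let ?s = "side lam (Suc (length u))"
  have sp: "?s > 0" by (rule side_pos)
  have st: "?t - ?s \<ge> delta * side lam (length u)" using sep[of "length u"] by simp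
  have od: "\<bar>Re (corner_off d) - Re (corner_off e)\<bar> = 1 \<or> \<bar>Im (corner_off d) - Im (corner_off e)\<bar> = 1"
    using assms(1-3) by (auto simp: corner_off_def)
  from assms(4,5) have P: "0 \<le> Re p - Re (sq_corner lam u) - ?t * Re (corner_off d)" "Re p - Re (sq_corner lam u) - ?t * Re (corner_off d) \<le> ?s"
      "0 \<le> Im p - Im (sq_corner lam u) - ?t * Im (corner_off d)" "Im p - Im (sq_corner lam u) - ?t * Im (corner_off d) \<le> ?s"
    and Q: "0 \<le> Re q - Re (sq_corner lam u) - ?t * Re (corner_off e)" "Re q - Re (sq_corner lam u) - ?t * Re (corner_off e) \<le> ?s"
      "0 \<le> Im q - Im (sq_corner lam u) - ?t * Im (corner_off e)" "Im q - Im (sq_corner lam u) - ?t * Im (corner_off e) \<le> ?s"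
    unfolding sq_iff corner_snoc by auto
  have "\<bar>Re (p - q)\<bar> \<ge> ?t - ?s \<or> \<bar>Im (p - q)\<bar> \<ge> ?t - ?s"
  proof (cases "\<bar>Re (corner_off d) - Re (corner_off e)\<bar> = 1")
    case True
    have "Re p - Re q = ?t * (Re (corner_off d) - Re (corner_off e)) + ((Re p - Re (sq_corner lam u) - ?t * Re (corner_off d)) - (Re q - Re (sq_corner lam u) - ?t * Re (corner_off e)))"
      by (simp add: algebra_simps)
    then have "\<bar>Re p - Re q\<bar> \<ge> ?t - ?s" using True P Q side_Suc_le[of "length u"]
      by (intro aux_sep[of "Re (corner_off d) - Re (corner_off e)" _ ?t "Re p - Re (sq_corner lam u) - ?t * Re (corner_off d)" "Re q - Re (sq_corner lam u) - ?t * Re (corner_off e)"]) auto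
    then show ?thesis by simp
  next
    case False
    then have F: "\<bar>Im (corner_off d) - Im (corner_off e)\<bar> = 1" using od by simp
    have "Im p - Im q = ?t * (Im (corner_off d) - Im (corner_off e)) + ((Im p - Im (sq_corner lam u) - ?t * Im (corner_off d)) - (Im q - Im (sq_corner lam u) - ?t * Im (corner_off e)))"
      by (simp add: algebra_simps)
    then have "\<bar>Im p - Im q\<bar> \<ge> ?t - ?s" using F P Q side_Suc_le[of "length u"]
      by (intro aux_sep[of "Im (corner_off d) - Im (corner_off e)" _ ?t "Im p - Im (sq_corner lam u) - ?t * Im (corner_off d)" "Im q - Im (sq_corner lam u) - ?t * Im (corner_off e)"]) auto
    then show ?thesis by simp
  qed
  then have "cmod (p - q) \<ge> ?t - ?s" using abs_Re_le_cmod[of "p - q"] abs_Im_le_cmod[of "p-q"] by linarith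
  then show ?thesis using st by linarith
qed

lemma words_snoc: "w \<in> words (Suc n) \<Longrightarrow> \<exists>u d. w = u @ [d] \<and> u \<in> words n \<and> d < 4"
proof -
  assume w: "w \<in> words (Suc n)"
  then have "w \<noteq> []" by (auto simp: words_def)
  then obtain u d where ud: "w = u @ [d]" by (metis rev_exhaust)
  then show ?thesis using w by (auto simp: words_def)
qed

lemma words_take: "w \<in> words n \<Longrightarrow> j \<le> n \<Longrightarrow> take j w \<in> words j"
  by (auto simp: words_def dest: in_set_takeD)

lemma words_nth: "w \<in> words n \<Longrightarrow> j < n \<Longrightarrow> w ! j < 4"
  unfolding words_def using nth_mem by fastforce

lemma sq_disj: "v \<in> words n \<Longrightarrow> w \<in> words n \<Longrightarrow> v \<noteq> w \<Longrightarrow> sq lam v \<inter> sq lam w = {}"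
proof (induction n arbitrary: v w)
  case 0 then show ?case by (simp add: words_def)
next
  case (Suc n)
  obtain u d where v: "v = u @ [d]" "u \<in> words n" "d < 4" using words_snoc[OF Suc.prems(1)] by blast
  obtain u' e where w: "w = u' @ [e]" "u' \<in> words n" "e < 4" using words_snoc[OF Suc.prems(2)] by blast
  show ?case
  proof (cases "u = u'")
    case True
    then have "d \<noteq> e" using Suc.prems(3) v w by auto
    have "cmod (p - q) > 0" if "p \<in> sq lam v" "q \<in> sq lam w" for p q
    proof -
      have "cmod (p - q) \<ge> delta * side lam (length u)"
        using sibling_dist[OF \<open>d \<noteq> e\<close> v(3) w(3)] that v w True by auto
      moreover have "delta * side lam (length u) > 0" using delta_pos side_pos by simp
      ultimately show ?thesis by linarith
    qed
    then show ?thesis by force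
  next
    case False
    then have "sq lam u \<inter> sq lam u' = {}" using Suc.IH v w by blast
    then show ?thesis using sq_snoc_sub v w by blast
  qed
qed

lemma sq_take_sub: "j \<le> length w \<Longrightarrow> sq lam w \<subseteq> sq lam (take j w)"
proof (induction "length w - j" arbitrary: j)
  case 0 then show ?case by simp
next
  case (Suc k)
  then have j: "j < length w" by simp
  have "sq lam w \<subseteq> sq lam (take (Suc j) w)" using Suc by simp
  also have "take (Suc j) w = take j w @ [w ! j]" using j by (simp add: take_Suc_conv_app_nth)
  also have "sq lam \<dots> \<subseteq> sq lam (take j w)" by (rule sq_snoc_sub)
  finally show ?case .
qed

lemma K_cover: "y \<in> cantorK lam \<Longrightarrow> \<exists>v\<in>words n. y \<in> sq lam v"
  unfolding cantorK_def gen_def by auto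

lemma layer_dist:
  assumes w: "w \<in> words n" and j: "j < n" and y: "y \<in> cantorK lam"
    and y1: "y \<in> sq lam (take j w)" and y2: "y \<notin> sq lam (take (Suc j) w)"
    and z: "z \<in> sq lam (take (Suc j) w)"
  shows "cmod (z - y) \<ge> delta * side lam j"
proof -
  obtain v where v: "v \<in> words (Suc j)" "y \<in> sq lam v" using K_cover[OF y] by blast
  have vlen: "length v = Suc j" using v by (simp add: words_def)
  have vsplit: "v = take j v @ [v ! j]" using vlen
    by (metis lessI take_Suc_conv_app_nth take_all order_refl)
  have "y \<in> sq lam (take j v)" using v(2) sq_take_sub[of j v] vlen by auto
  moreover have "take j v \<in> words j" using words_take[OF v(1)] by simp
  moreover have "take j w \<in> words j" using words_take[OF w] j by simp
  ultimately have tj: "take j v = take j w" using y1 sq_disj by blast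
  have wsplit: "take (Suc j) w = take j w @ [w ! j]" using w j
    by (simp add: words_def take_Suc_conv_app_nth)
  have "v ! j \<noteq> w ! j" using y2 v(2) vsplit wsplit tj by metis
  have lj: "length (take j w) = j" using w j by (simp add: words_def)
  have "cmod (z - y) \<ge> delta * side lam (length (take j w))"
    using sibling_dist[OF _ words_nth[OF w j] words_nth[OF v(1)]] \<open>v ! j \<noteq> w ! j\<close> z v(2) vsplit wsplit tj
    by (metis lessI)
  then show ?thesis using lj by simp
qed

lemma layer_exists:
  assumes w: "w \<in> words n" and y: "y \<in> cantorK lam" and yn: "y \<notin> sq lam w"
  shows "\<exists>j<n. y \<in> sq lam (take j w) \<and> y \<notin> sq lam (take (Suc j) w)"
proof (rule ccontr)
  assume H: "\<not> ?thesis"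
  have "i \<le> n \<Longrightarrow> y \<in> sq lam (take i w)" for i
  proof (induction i)
    case 0
    obtain v where "v \<in> words 0" "y \<in> sq lam v" using K_cover[OF y] by blast
    then show ?case by (simp add: words_def)
  next
    case (Suc i) then show ?case using H by auto
  qed
  from this[of n] have "y \<in> sq lam w" using w by (simp add: words_def)
  then show False using yn by simp
qed

lemma dist_out:
  assumes w: "w \<in> words n" and z: "z \<in> sq lam w" and y: "y \<in> cantorK lam" and yn: "y \<notin> sq lam w"
  shows "cmod (z - y) \<ge> delta * side lam n"
proof -
  obtain j where j: "j < n" "y \<in> sq lam (take j w)" "y \<notin> sq lam (take (Suc j) w)"
    using layer_exists[OF w y yn] by blast
  have "z \<in> sq lam (take (Suc j) w)" using z sq_take_sub[of "Suc j" w] w j by (auto simp: words_def)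
  then have "cmod (z - y) \<ge> delta * side lam j" using layer_dist[OF w j(1) y j(2,3)] by simp
  moreover have "side lam n \<le> side lam j" using j by (intro side_mono) simp
  ultimately show ?thesis using delta_pos by (smt (verit) mult_left_mono)
qed

lemma diam: "z \<in> sq lam w \<Longrightarrow> z' \<in> sq lam w \<Longrightarrow> cmod (z - z') \<le> 2 * side lam (length w)"
  using cmod_le[of "z - z'"] unfolding sq_iff by auto


end


locale measloc = lamloc +
  fixes \<mu> :: "complex measure"
  assumes cm: "cantor_measure lam \<mu>"
begin

lemma ps: "prob_space \<mu>" using cm by (simp add: cantor_measure_def)
lemma sets_mu: "sets \<mu> = sets borel" using cm by (simp add: cantor_measure_def)
lemma space_mu[simp]: "space \<mu> = UNIV" using sets_eq_imp_space_eq[OF sets_mu] by simp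
lemma fm: "finite_measure \<mu>" using ps by (simp add: prob_space_def)

lemma sq_closed: "closed (sq lam w)"
proof -
  have "sq lam w = {p. 0 \<le> Re p - Re (sq_corner lam w) \<and> Re p - Re (sq_corner lam w) \<le> side lam (length w) \<and>
   0 \<le> Im p - Im (sq_corner lam w) \<and> Im p - Im (sq_corner lam w) \<le> side lam (length w)}"
    using sq_iff by blast
  also have "closed \<dots>"
    by (intro closed_Collect_conj closed_Collect_le continuous_intros)
  finally show ?thesis .
qed

lemma sq_meas[measurable]: "sq lam w \<in> sets \<mu>"
  using sq_closed sets_mu by simp

lemma K_closed: "closed (cantorK lam)"
proof -
  have "finite (words n)" for n
  proof -
    have "words n \<subseteq> {xs. set xs \<subseteq> {0..<4} \<and> length xs = n}" by (auto simp: words_def)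
    then show ?thesis using finite_lists_length_eq[of "{0..<(4::nat)}" n] finite_subset by blast
  qed
  then show ?thesis unfolding cantorK_def gen_def
    by (intro closed_INT ballI closed_Union) (auto intro: sq_closed)
qed

lemma K_meas[measurable]: "cantorK lam \<in> sets \<mu>"
  using K_closed sets_mu by simp

lemma AE_K: "AE y in \<mu>. y \<in> cantorK lam"
proof -
  have "emeasure \<mu> (cantorK lam) = 1" using cm by (simp add: cantor_measure_def)
  then have "measure \<mu> (cantorK lam) = 1" by (simp add: measure_def)
  then show ?thesis using prob_space.AE_prob_1[OF ps] by simp
qed

lemma meas_sq: "w \<in> words n \<Longrightarrow> measure \<mu> (sq lam w) = 1 / 4 ^ n"
  using cm by (auto simp: cantor_measure_def gen_def)

lemma meas_le1: "measure \<mu> A \<le> 1"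
  using prob_space.prob_le_1[OF ps] by simp

definition F :: "complex set \<Rightarrow> complex \<Rightarrow> complex" where
  "F A z = (LINT y:A|\<mu>. cauchy_kernel (z - y))"

lemma ker_meas[measurable]: "(\<lambda>y. cauchy_kernel (z - y)) \<in> borel_measurable \<mu>"
  unfolding cauchy_kernel_def
  by (subst measurable_cong_sets[OF sets_mu refl]) measurable

lemma F_meas:
  assumes [measurable]: "A \<in> sets borel"
  shows "F A \<in> borel_measurable \<mu>"
proof -
  have sp: "sigma_finite_measure \<mu>" using fm by (simp add: finite_measure_def)
  have "(\<lambda>(z, y). indicator A y *\<^sub>R cauchy_kernel (z - y)) \<in> borel_measurable (\<mu> \<Otimes>\<^sub>M \<mu>)"
    unfolding cauchy_kernel_def
    apply (subst measurable_cong_sets[OF sets_pair_measure_cong[OF sets_mu sets_mu] refl])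
    by measurable
  then have "(\<lambda>z. \<integral>y. indicator A y *\<^sub>R cauchy_kernel (z - y) \<partial>\<mu>) \<in> borel_measurable \<mu>"
    using sigma_finite_measure.borel_measurable_lebesgue_integral[OF sp, of "\<lambda>z y. indicator A y *\<^sub>R cauchy_kernel (z - y)" \<mu>]
    by simp
  then show ?thesis unfolding F_def set_lebesgue_integral_def .
qed

lemma F_bound:
  assumes [measurable]: "A \<in> sets borel" and d: "d > 0"
    and dist: "\<And>y. y \<in> A \<Longrightarrow> y \<in> cantorK lam \<Longrightarrow> d \<le> cmod (z - y)"
  shows "integrable \<mu> (\<lambda>y. indicator A y *\<^sub>R cauchy_kernel (z - y))"
    and "cmod (F A z) \<le> measure \<mu> A / d"
proof -
  have pt: "AE y in \<mu>. norm (indicator A y *\<^sub>R cauchy_kernel (z - y)) \<le> indicator A y * (1 / d)"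
    using AE_K
  proof eventually_elim
    case (elim y)
    show ?case
    proof (cases "y \<in> A")
      case True
      then have "d \<le> cmod (z - y)" using dist elim by simp
      then have "cmod (1 / (z - y)) \<le> 1 / d" using d
        by (simp add: norm_divide divide_simps)
      then show ?thesis using True by (simp add: cauchy_kernel_def)
    qed simp
  qed
  have Am: "A \<in> sets \<mu>" using sets_mu by simp
  have m: "(\<lambda>y. indicator A y *\<^sub>R cauchy_kernel (z - y)) \<in> borel_measurable \<mu>"
    using ker_meas Am by measurable
  show I: "integrable \<mu> (\<lambda>y. indicator A y *\<^sub>R cauchy_kernel (z - y))"
  proof (rule finite_measure.integrable_const_bound[OF fm _ m, where B="1/d"])
    show "AE x in \<mu>. norm (indicator A x *\<^sub>R cauchy_kernel (z - x)) \<le> 1 / d"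
      using pt by (rule AE_mp) (use d in \<open>auto simp: indicator_def\<close>)
  qed
  have fin: "emeasure \<mu> A < \<top>"
    using finite_measure.emeasure_finite[OF fm, of A] by (simp add: top.not_eq_extremum)
  have Ii: "integrable \<mu> (\<lambda>y. indicator A y * (1 / d) :: real)"
    using Am fin by (intro integrable_mult_left integrable_real_indicator) auto
  have "cmod (F A z) \<le> (\<integral>y. norm (indicator A y *\<^sub>R cauchy_kernel (z - y)) \<partial>\<mu>)"
    unfolding F_def set_lebesgue_integral_def by (rule integral_norm_bound)
  also have "\<dots> \<le> (\<integral>y. indicator A y * (1 / d) \<partial>\<mu>)"
    using integrable_norm[OF I] Ii pt by (intro integral_mono_AE) auto
  also have "\<dots> = measure \<mu> A / d" using Am by simp
  finally show "cmod (F A z) \<le> measure \<mu> A / d" .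
qed

end


context lamloc begin

lemma L_pos: "L \<ge> 1/4" using lb[of 1] ub[of 1] by simp

definition r where "r = 4 * L^2"
lemma r_bounds: "0 < r" "r < 1"
proof -
  show "0 < r" using L_pos by (simp add: r_def)
  have "L^2 < (1/2)^2" using L_pos Lhalf by (intro power_strict_mono) auto
  then show "r < 1" by (simp add: r_def power2_eq_square)
qed

lemma term_bound:
  assumes "j < n"
  shows "4^n * side lam n ^ 2 / (4^j * side lam j ^ 2) \<le> r ^ (n - Suc j)"
proof -
  have sj: "side lam j > 0" "side lam n > 0" by (rule side_pos)+
  have "side lam n \<le> side lam j * L ^ (n - j)" using assms by (intro side_geo) simp
  then have "side lam n ^ 2 \<le> (side lam j * L ^ (n - j)) ^ 2" using sj by (intro power_mono) auto
  then have a: "side lam n ^ 2 \<le> side lam j ^ 2 * (L^2) ^ (n - j)"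
    by (simp add: power_mult_distrib power_mult[symmetric] mult.commute)
  have e: "(4::real)^n = 4^j * 4^(n-j)" using assms by (simp add: power_add[symmetric])
  have "4^n * side lam n ^ 2 / (4^j * side lam j ^ 2) = 4^(n-j) * (side lam n ^ 2 / side lam j ^ 2)"
    using sj by (simp add: e field_simps)
  also have "\<dots> \<le> 4^(n-j) * (L^2) ^ (n - j)"
    using a sj by (intro mult_left_mono) (auto simp: divide_simps mult.commute)
  also have "\<dots> = r ^ (n - j)" by (simp add: r_def power_mult_distrib)
  also have "\<dots> \<le> r ^ (n - Suc j)" using r_bounds assms by (intro power_decreasing) auto
  finally show ?thesis .
qed

definition C1 where "C1 = 2 / (delta^2 * (1 - r))"

lemma geo_sum: "2 * side lam n * (\<Sum>j<n. (1 / 4^j) / (delta * side lam j)^2) \<le> C1 * a_seq lam n"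
proof -
  have sn: "side lam n > 0" by (rule side_pos)
  have dp: "delta > 0" by (rule delta_pos)
  have "(\<Sum>j<n. 4^n * side lam n ^ 2 / (4^j * side lam j ^ 2)) \<le> (\<Sum>j<n. r ^ (n - Suc j))"
    by (intro sum_mono term_bound) simp
  also have "\<dots> = (\<Sum>j<n. r ^ j)" by (rule sum.nat_diff_reindex)
  also have "\<dots> = (1 - r^n) / (1 - r)" using r_bounds by (simp add: sum_gp_strict)
  also have "\<dots> \<le> 1 / (1 - r)" using r_bounds by (simp add: divide_right_mono)
  finally have S: "(\<Sum>j<n. 4^n * side lam n ^ 2 / (4^j * side lam j ^ 2)) \<le> 1 / (1 - r)" .
  have "2 * side lam n * (\<Sum>j<n. (1 / 4^j) / (delta * side lam j)^2)
      = (2 / (delta^2 * 4^n * side lam n)) * (\<Sum>j<n. 4^n * side lam n ^ 2 / (4^j * side lam j ^ 2))"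
    using sn dp by (simp add: sum_distrib_left power2_eq_square field_simps)
  also have "\<dots> \<le> (2 / (delta^2 * 4^n * side lam n)) * (1 / (1 - r))"
    using S sn dp by (intro mult_left_mono) auto
  also have "\<dots> = C1 * a_seq lam n" by (simp add: C1_def a_seq_def field_simps)
  finally show ?thesis .
qed

end

context measloc begin

lemma F_sq:
  assumes w: "w \<in> words n" and A: "A \<in> sets borel" and dj: "A \<inter> sq lam w = {}" and z: "z \<in> sq lam w"
  shows "integrable \<mu> (\<lambda>y. indicator A y *\<^sub>R cauchy_kernel (z - y))"
    and "cmod (F A z) \<le> 1 / (delta * side lam n)"
proof -
  have d: "delta * side lam n > 0" using delta_pos side_pos by simp
  have ds: "\<And>y. y \<in> A \<Longrightarrow> y \<in> cantorK lam \<Longrightarrow> delta * side lam n \<le> cmod (z - y)"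
    using dist_out[OF w z] dj by blast
  show "integrable \<mu> (\<lambda>y. indicator A y *\<^sub>R cauchy_kernel (z - y))" using F_bound(1)[OF A d ds] .
  have "cmod (F A z) \<le> measure \<mu> A / (delta * side lam n)" using F_bound(2)[OF A d ds] .
  also have "\<dots> \<le> 1 / (delta * side lam n)" using meas_le1[of A] d by (simp add: divide_right_mono)
  finally show "cmod (F A z) \<le> 1 / (delta * side lam n)" .
qed

lemma F_setint:
  assumes w: "w \<in> words n" and A: "A \<in> sets borel" and dj: "A \<inter> sq lam w = {}"
    and S: "S \<in> sets borel" and Ss: "S \<subseteq> sq lam w"
  shows "set_integrable \<mu> S (F A)"
proof -
  have m: "(\<lambda>z. indicator S z *\<^sub>R F A z) \<in> borel_measurable \<mu>"
    using F_meas[OF A] S sets_mu by measurable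
  show ?thesis unfolding set_integrable_def
  proof (rule finite_measure.integrable_const_bound[OF fm _ m, where B="1 / (delta * side lam n)"])
    show "AE x in \<mu>. norm (indicator S x *\<^sub>R F A x) \<le> 1 / (delta * side lam n)"
    proof (rule AE_I2)
      fix x show "norm (indicator S x *\<^sub>R F A x) \<le> 1 / (delta * side lam n)"
      proof (cases "x \<in> S")
        case True then show ?thesis using F_sq(2)[OF w A dj] Ss by auto
      next
        case False then show ?thesis using delta_pos side_pos[of n] by simp
      qed
    qed
  qed
qed

lemma ker_diff:
  assumes "z \<noteq> y" "z' \<noteq> y"
  shows "cmod (cauchy_kernel (z - y) - cauchy_kernel (z' - y)) = cmod (z' - z) / (cmod (z - y) * cmod (z' - y))"
proof -
  have "cauchy_kernel (z - y) - cauchy_kernel (z' - y) = (z' - z) / ((z - y) * (z' - y))"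
    using assms by (simp add: cauchy_kernel_def field_simps)
  then show ?thesis by (simp add: norm_divide norm_mult)
qed

lemma osc:
  assumes w: "w \<in> words n" and A: "A \<in> sets borel" and dj: "A \<inter> sq lam w = {}"
    and z: "z \<in> sq lam w" and z': "z' \<in> sq lam w"
  shows "cmod (F A z - F A z') \<le> C1 * a_seq lam n"
proof -
  have wl: "length w = n" using w by (simp add: words_def)
  define h where "h y = (\<Sum>j<n. indicator (sq lam (take j w)) y * (1 / (delta * side lam j)^2))" for y
  have I1: "integrable \<mu> (\<lambda>y. indicator A y *\<^sub>R cauchy_kernel (z - y))" by (rule F_sq(1)[OF w A dj z])
  have I2: "integrable \<mu> (\<lambda>y. indicator A y *\<^sub>R cauchy_kernel (z' - y))" by (rule F_sq(1)[OF w A dj z'])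
  have fin: "\<And>B. emeasure \<mu> B < \<top>"
    using finite_measure.emeasure_finite[OF fm] by (simp add: top.not_eq_extremum)
  have Ih: "integrable \<mu> (\<lambda>y. 2 * side lam n * h y)"
    unfolding h_def using fin sets_mu
    by (intro integrable_mult_right integrable_sum integrable_mult_left integrable_real_indicator) auto
  have eq: "F A z - F A z' = (\<integral>y. indicator A y *\<^sub>R cauchy_kernel (z - y) - indicator A y *\<^sub>R cauchy_kernel (z' - y) \<partial>\<mu>)"
    unfolding F_def set_lebesgue_integral_def using I1 I2 by (simp add: integral_diff)
  have pt: "AE y in \<mu>. norm (indicator A y *\<^sub>R cauchy_kernel (z - y) - indicator A y *\<^sub>R cauchy_kernel (z' - y)) \<le> 2 * side lam n * h y"
    using AE_K
  proof eventually_elim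
    case (elim y)
    have hnn: "h y \<ge> 0" unfolding h_def by (intro sum_nonneg) auto
    show ?case
    proof (cases "y \<in> A")
      case False then show ?thesis using hnn side_pos[of n] by simp
    next
      case True
      then have yn: "y \<notin> sq lam w" using dj by auto
      obtain j where j: "j < n" "y \<in> sq lam (take j w)" "y \<notin> sq lam (take (Suc j) w)"
        using layer_exists[OF w elim yn] by blast
      have sub: "sq lam w \<subseteq> sq lam (take (Suc j) w)" using sq_take_sub[of "Suc j" w] wl j by simp
      let ?D = "delta * side lam j"
      have Dp: "?D > 0" using delta_pos side_pos by simp
      have d1: "cmod (z - y) \<ge> ?D" using layer_dist[OF w j(1) elim j(2,3)] sub z by auto
      have d2: "cmod (z' - y) \<ge> ?D" using layer_dist[OF w j(1) elim j(2,3)] sub z' by auto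
      have ne: "z \<noteq> y" "z' \<noteq> y" using d1 d2 Dp by auto
      have dm: "cmod (z' - z) \<le> 2 * side lam n" using diam[OF z' z] wl by simp
      have "norm (indicator A y *\<^sub>R cauchy_kernel (z - y) - indicator A y *\<^sub>R cauchy_kernel (z' - y))
          = cmod (z' - z) / (cmod (z - y) * cmod (z' - y))" using True ker_diff[OF ne] by simp
      also have "\<dots> \<le> 2 * side lam n / (?D * ?D)"
        using dm d1 d2 Dp side_pos[of n] by (intro frac_le mult_mono) auto
      also have "\<dots> = 2 * side lam n * (indicator (sq lam (take j w)) y * (1 / (delta * side lam j)^2))"
        using j by (simp add: power2_eq_square)
      also have "\<dots> \<le> 2 * side lam n * h y" unfolding h_def
        using side_pos[of n] j by (intro mult_left_mono member_le_sum[of j "{..<n}"]) auto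
      finally show ?thesis .
    qed
  qed
  have "cmod (F A z - F A z') \<le> (\<integral>y. norm (indicator A y *\<^sub>R cauchy_kernel (z - y) - indicator A y *\<^sub>R cauchy_kernel (z' - y)) \<partial>\<mu>)"
    unfolding eq by (rule integral_norm_bound)
  also have "\<dots> \<le> (\<integral>y. 2 * side lam n * h y \<partial>\<mu>)"
    using integrable_norm[OF Bochner_Integration.integrable_diff[OF I1 I2]] Ih pt by (intro integral_mono_AE) auto
  also have "\<dots> = 2 * side lam n * (\<Sum>j<n. (1 / 4^j) / (delta * side lam j)^2)"
  proof -
    have "(\<integral>y. h y \<partial>\<mu>) = (\<Sum>j<n. measure \<mu> (sq lam (take j w)) * (1 / (delta * side lam j)^2))"
    proof -
      have "(\<integral>y. h y \<partial>\<mu>) = (\<Sum>j<n. (\<integral>y. indicator (sq lam (take j w)) y * (1 / (delta * side lam j)^2) \<partial>\<mu>))"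
        unfolding h_def by (rule Bochner_Integration.integral_sum) (use fin in \<open>auto intro!: integrable_mult_left integrable_real_indicator\<close>)
      also have "\<dots> = (\<Sum>j<n. measure \<mu> (sq lam (take j w)) * (1 / (delta * side lam j)^2))"
        by (intro sum.cong refl) simp
      finally show ?thesis .
    qed
    also have "\<dots> = (\<Sum>j<n. (1 / 4^j) / (delta * side lam j)^2)"
      using meas_sq[OF words_take[OF w]] by (intro sum.cong) auto
    finally show ?thesis by simp
  qed
  also have "\<dots> \<le> C1 * a_seq lam n" by (rule geo_sum)
  finally show ?thesis .
qed

end


context measloc begin

lemma fin_all: "emeasure \<mu> B < \<top>"
  using finite_measure.emeasure_finite[OF fm] by (simp add: top.not_eq_extremum)

lemma avg:
  assumes S: "S \<in> sets borel" and Sp: "measure \<mu> S > 0" and I: "set_integrable \<mu> S f"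
    and B: "\<And>z. z \<in> S \<Longrightarrow> cmod (f z - c) \<le> B"
  shows "cmod ((1 / measure \<mu> S) *\<^sub>R (LINT z:S|\<mu>. f z) - c) \<le> B"
proof -
  let ?m = "measure \<mu> S"
  have Ic: "integrable \<mu> (\<lambda>z. indicator S z *\<^sub>R c)"
    using fin_all S sets_mu by (intro integrable_scaleR_left integrable_real_indicator) auto
  have If: "integrable \<mu> (\<lambda>z. indicator S z *\<^sub>R f z)" using I by (simp add: set_integrable_def)
  have c: "(\<integral>z. indicator S z *\<^sub>R c \<partial>\<mu>) = ?m *\<^sub>R c"
  proof -
    have "integrable \<mu> (indicator S :: complex \<Rightarrow> real)" using S sets_mu fin_all by (intro integrable_real_indicator) auto
    then have "(\<integral>z. indicator S z *\<^sub>R c \<partial>\<mu>) = (\<integral>z. indicator S z \<partial>\<mu>) *\<^sub>R c" by (rule integral_scaleR_left)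
    also have "(\<integral>z. indicator S z \<partial>\<mu>) = ?m" using S sets_mu by simp
    finally show ?thesis .
  qed
  have eq: "(LINT z:S|\<mu>. f z) - ?m *\<^sub>R c = (\<integral>z. indicator S z *\<^sub>R f z - indicator S z *\<^sub>R c \<partial>\<mu>)"
    unfolding set_lebesgue_integral_def using If Ic c by (simp add: Bochner_Integration.integral_diff)
  have IB: "integrable \<mu> (\<lambda>z. indicator S z * B :: real)"
    using fin_all S sets_mu by (intro integrable_mult_left integrable_real_indicator) auto
  have "cmod ((LINT z:S|\<mu>. f z) - ?m *\<^sub>R c) \<le> (\<integral>z. norm (indicator S z *\<^sub>R f z - indicator S z *\<^sub>R c) \<partial>\<mu>)"
    unfolding eq by (rule integral_norm_bound)
  also have "\<dots> \<le> (\<integral>z. indicator S z * B \<partial>\<mu>)"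
  proof (rule integral_mono)
    show "integrable \<mu> (\<lambda>z. norm (indicator S z *\<^sub>R f z - indicator S z *\<^sub>R c))"
      using integrable_norm[OF Bochner_Integration.integrable_diff[OF If Ic]] .
    show "integrable \<mu> (\<lambda>z. indicator S z * B)" by (rule IB)
    fix z show "norm (indicator S z *\<^sub>R f z - indicator S z *\<^sub>R c) \<le> indicator S z * B"
      using B[of z] by (cases "z \<in> S") (auto simp: scaleR_diff_right[symmetric])
  qed
  also have "\<dots> = ?m * B" using S sets_mu by simp
  finally have X: "cmod ((LINT z:S|\<mu>. f z) - ?m *\<^sub>R c) \<le> ?m * B" .
  have "(1 / ?m) *\<^sub>R (LINT z:S|\<mu>. f z) - c = (1 / ?m) *\<^sub>R ((LINT z:S|\<mu>. f z) - ?m *\<^sub>R c)"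
    using Sp by (simp add: scaleR_diff_right)
  then have "cmod ((1 / ?m) *\<^sub>R (LINT z:S|\<mu>. f z) - c) = (1 / ?m) * cmod ((LINT z:S|\<mu>. f z) - ?m *\<^sub>R c)"
    using Sp by simp
  also have "\<dots> \<le> (1 / ?m) * (?m * B)" using X Sp by (intro mult_left_mono) auto
  also have "\<dots> = B" using Sp by simp
  finally show ?thesis .
qed

lemma sq_nonempty: "sq_corner lam w \<in> sq lam w"
  using side_pos[of "length w"] by (simp add: sq_iff less_imp_le)

lemma sq_borel: "sq lam w \<in> sets borel" using sq_closed by simp
lemma K_borel: "cantorK lam \<in> sets borel" using K_closed by simp

lemma split_F:
  assumes A1: "A1 \<in> sets borel" and A2: "A2 \<in> sets borel" and A: "A \<in> sets borel"
    and ind: "\<And>y. y \<in> cantorK lam \<Longrightarrow> indicator A y = (indicator A1 y + indicator A2 y :: real)"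
    and I1: "integrable \<mu> (\<lambda>y. indicator A1 y *\<^sub>R cauchy_kernel (z - y))"
    and I2: "integrable \<mu> (\<lambda>y. indicator A2 y *\<^sub>R cauchy_kernel (z - y))"
  shows "F A z = F A1 z + F A2 z"
proof -
  have "F A z = (\<integral>y. indicator A1 y *\<^sub>R cauchy_kernel (z - y) + indicator A2 y *\<^sub>R cauchy_kernel (z - y) \<partial>\<mu>)"
    unfolding F_def set_lebesgue_integral_def
  proof (rule integral_cong_AE)
    show "(\<lambda>y. indicator A y *\<^sub>R cauchy_kernel (z - y)) \<in> borel_measurable \<mu>"
      using A sets_mu by measurable
    show "(\<lambda>y. indicator A1 y *\<^sub>R cauchy_kernel (z - y) + indicator A2 y *\<^sub>R cauchy_kernel (z - y)) \<in> borel_measurable \<mu>"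
      using A1 A2 sets_mu by measurable
    show "AE y in \<mu>. indicator A y *\<^sub>R cauchy_kernel (z - y) = indicator A1 y *\<^sub>R cauchy_kernel (z - y) + indicator A2 y *\<^sub>R cauchy_kernel (z - y)"
      using AE_K by eventually_elim (simp add: ind scaleR_add_left)
  qed
  also have "\<dots> = F A1 z + F A2 z"
    unfolding F_def set_lebesgue_integral_def using I1 I2 by (rule Bochner_Integration.integral_add)
  finally show ?thesis .
qed

lemma part1:
  assumes Q: "Q \<in> gen lam m" and R: "R \<in> gen lam n" and RQ: "R \<subseteq> Q"
  shows "cmod (S_mart \<mu> (cantorK lam) R - S_mart \<mu> (cantorK lam) Q - S_rel \<mu> Q R) \<le> 2 * C1 * a_seq lam m"
proof -
  obtain wq where wq: "wq \<in> words m" "Q = sq lam wq" using Q by (auto simp: gen_def)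
  obtain wr where wr: "wr \<in> words n" "R = sq lam wr" using R by (auto simp: gen_def)
  let ?K = "cantorK lam"
  have Qb: "Q \<in> sets borel" and Rb: "R \<in> sets borel" using wq wr sq_borel by auto
  have Kb: "?K \<in> sets borel" by (rule K_borel)
  have pt: "F (?K - R) z = F (?K - Q) z + F (Q - R) z" if z: "z \<in> R" for z
  proof (rule split_F)
    show "?K - R \<in> sets borel" "?K - Q \<in> sets borel" "Q - R \<in> sets borel" using Qb Rb Kb by auto
    show "\<And>y. y \<in> ?K \<Longrightarrow> indicator (?K - R) y = (indicator (?K - Q) y + indicator (Q - R) y :: real)"
      using RQ by (auto simp: indicator_def)
    show "integrable \<mu> (\<lambda>y. indicator (?K - Q) y *\<^sub>R cauchy_kernel (z - y))"
      using F_sq(1)[OF wq(1), of "?K - Q" z] Qb Kb z RQ wq by auto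
    show "integrable \<mu> (\<lambda>y. indicator (Q - R) y *\<^sub>R cauchy_kernel (z - y))"
      using F_sq(1)[OF wr(1), of "Q - R" z] Qb Rb z wr by auto
  qed
  have si1: "set_integrable \<mu> R (F (?K - Q))"
    using F_setint[OF wq(1), of "?K - Q" R] Qb Kb Rb RQ wq by auto
  have si2: "set_integrable \<mu> R (F (Q - R))"
    using F_setint[OF wr(1), of "Q - R" R] Qb Rb wr by auto
  have si3: "set_integrable \<mu> Q (F (?K - Q))"
    using F_setint[OF wq(1), of "?K - Q" Q] Qb Kb wq by auto
  have "(LINT z:R|\<mu>. F (?K - R) z) = (LINT z:R|\<mu>. F (?K - Q) z + F (Q - R) z)"
    using pt by (intro set_lebesgue_integral_cong) (auto simp: Rb sets_mu)
  also have "\<dots> = (LINT z:R|\<mu>. F (?K - Q) z) + (LINT z:R|\<mu>. F (Q - R) z)"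
    using si1 si2 by (rule set_integral_add)
  finally have E: "(LINT z:R|\<mu>. F (?K - R) z) = (LINT z:R|\<mu>. F (?K - Q) z) + (LINT z:R|\<mu>. F (Q - R) z)" .
  have mR: "measure \<mu> R > 0" using meas_sq[OF wr(1)] wr by simp
  have mQ: "measure \<mu> Q > 0" using meas_sq[OF wq(1)] wq by simp
  have diff: "S_mart \<mu> ?K R - S_mart \<mu> ?K Q - S_rel \<mu> Q R =
     ((1 / measure \<mu> R) *\<^sub>R (LINT z:R|\<mu>. F (?K - Q) z) - F (?K - Q) (sq_corner lam wr))
     - ((1 / measure \<mu> Q) *\<^sub>R (LINT z:Q|\<mu>. F (?K - Q) z) - F (?K - Q) (sq_corner lam wr))"
    unfolding S_mart_def S_rel_def F_def[symmetric] E by (simp add: scaleR_add_right)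
  have z0: "sq_corner lam wr \<in> Q" using sq_nonempty[of wr] wr RQ by auto
  have B: "\<And>z. z \<in> Q \<Longrightarrow> cmod (F (?K - Q) z - F (?K - Q) (sq_corner lam wr)) \<le> C1 * a_seq lam m"
    using osc[OF wq(1), of "?K - Q"] Kb Qb wq z0 by auto
  have b1: "cmod ((1 / measure \<mu> R) *\<^sub>R (LINT z:R|\<mu>. F (?K - Q) z) - F (?K - Q) (sq_corner lam wr)) \<le> C1 * a_seq lam m"
    using avg[OF Rb mR si1] B RQ by auto
  have b2: "cmod ((1 / measure \<mu> Q) *\<^sub>R (LINT z:Q|\<mu>. F (?K - Q) z) - F (?K - Q) (sq_corner lam wr)) \<le> C1 * a_seq lam m"
    using avg[OF Qb mQ si3] B by auto
  show ?thesis unfolding diff using norm_triangle_ineq4[of "(1 / measure \<mu> R) *\<^sub>R (LINT z:R|\<mu>. F (?K - Q) z) - F (?K - Q) (sq_corner lam wr)"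
      "(1 / measure \<mu> Q) *\<^sub>R (LINT z:Q|\<mu>. F (?K - Q) z) - F (?K - Q) (sq_corner lam wr)"] b1 b2 by linarith
qed

lemma part2:
  assumes Q: "Q \<in> gen lam m" and Rt: "Rt \<in> gen lam n" and R: "R \<in> gen lam (Suc n)"
    and RRt: "R \<subseteq> Rt" and RtQ: "Rt \<subseteq> Q"
  shows "cmod (S_rel \<mu> Q R - S_rel \<mu> Q Rt) \<le> (2 * C1 + 4 / delta) * a_seq lam n"
proof -
  obtain wq where wq: "wq \<in> words m" "Q = sq lam wq" using Q by (auto simp: gen_def)
  obtain wt where wt: "wt \<in> words n" "Rt = sq lam wt" using Rt by (auto simp: gen_def)
  obtain wr where wr: "wr \<in> words (Suc n)" "R = sq lam wr" using R by (auto simp: gen_def)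
  have Qb: "Q \<in> sets borel" and Rb: "R \<in> sets borel" and Rtb: "Rt \<in> sets borel"
    using wq wr wt sq_borel by auto
  have pt: "F (Q - R) z = F (Q - Rt) z + F (Rt - R) z" if z: "z \<in> R" for z
  proof (rule split_F)
    show "Q - Rt \<in> sets borel" "Rt - R \<in> sets borel" "Q - R \<in> sets borel" using Qb Rb Rtb by auto
    show "\<And>y. y \<in> cantorK lam \<Longrightarrow> indicator (Q - R) y = (indicator (Q - Rt) y + indicator (Rt - R) y :: real)"
      using RRt RtQ by (auto simp: indicator_def)
    show "integrable \<mu> (\<lambda>y. indicator (Q - Rt) y *\<^sub>R cauchy_kernel (z - y))"
      using F_sq(1)[OF wt(1), of "Q - Rt" z] Qb Rtb z RRt wt by auto
    show "integrable \<mu> (\<lambda>y. indicator (Rt - R) y *\<^sub>R cauchy_kernel (z - y))"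
      using F_sq(1)[OF wr(1), of "Rt - R" z] Rtb Rb z wr by auto
  qed
  have si1: "set_integrable \<mu> R (F (Q - Rt))"
    using F_setint[OF wt(1), of "Q - Rt" R] Qb Rtb Rb RRt wt by auto
  have si2: "set_integrable \<mu> R (F (Rt - R))"
    using F_setint[OF wr(1), of "Rt - R" R] Rtb Rb wr by auto
  have si3: "set_integrable \<mu> Rt (F (Q - Rt))"
    using F_setint[OF wt(1), of "Q - Rt" Rt] Qb Rtb wt by auto
  have "(LINT z:R|\<mu>. F (Q - R) z) = (LINT z:R|\<mu>. F (Q - Rt) z + F (Rt - R) z)"
    using pt by (intro set_lebesgue_integral_cong) (auto simp: Rb sets_mu)
  also have "\<dots> = (LINT z:R|\<mu>. F (Q - Rt) z) + (LINT z:R|\<mu>. F (Rt - R) z)"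
    using si1 si2 by (rule set_integral_add)
  finally have E: "(LINT z:R|\<mu>. F (Q - R) z) = (LINT z:R|\<mu>. F (Q - Rt) z) + (LINT z:R|\<mu>. F (Rt - R) z)" .
  have mR: "measure \<mu> R > 0" using meas_sq[OF wr(1)] wr by simp
  have mRt: "measure \<mu> Rt > 0" using meas_sq[OF wt(1)] wt by simp
  let ?z0 = "sq_corner lam wr"
  have diff: "S_rel \<mu> Q R - S_rel \<mu> Q Rt =
     ((1 / measure \<mu> R) *\<^sub>R (LINT z:R|\<mu>. F (Q - Rt) z) - F (Q - Rt) ?z0)
     - ((1 / measure \<mu> Rt) *\<^sub>R (LINT z:Rt|\<mu>. F (Q - Rt) z) - F (Q - Rt) ?z0)
     + ((1 / measure \<mu> R) *\<^sub>R (LINT z:R|\<mu>. F (Rt - R) z) - 0)"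
    unfolding S_rel_def F_def[symmetric] E by (simp add: scaleR_add_right)
  have z0: "?z0 \<in> Rt" using sq_nonempty[of wr] wr RRt by auto
  have B: "\<And>z. z \<in> Rt \<Longrightarrow> cmod (F (Q - Rt) z - F (Q - Rt) ?z0) \<le> C1 * a_seq lam n"
    using osc[OF wt(1), of "Q - Rt"] Rtb Qb wt z0 by auto
  have b1: "cmod ((1 / measure \<mu> R) *\<^sub>R (LINT z:R|\<mu>. F (Q - Rt) z) - F (Q - Rt) ?z0) \<le> C1 * a_seq lam n"
    using avg[OF Rb mR si1] B RRt by auto
  have b2: "cmod ((1 / measure \<mu> Rt) *\<^sub>R (LINT z:Rt|\<mu>. F (Q - Rt) z) - F (Q - Rt) ?z0) \<le> C1 * a_seq lam n"
    using avg[OF Rtb mRt si3] B by auto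
  have B3: "cmod (F (Rt - R) z - 0) \<le> 4 / delta * a_seq lam n" if z: "z \<in> R" for z
  proof -
    let ?d = "delta * side lam (Suc n)"
    have dp: "?d > 0" using delta_pos side_pos by simp
    have ds: "\<And>y. y \<in> Rt - R \<Longrightarrow> y \<in> cantorK lam \<Longrightarrow> ?d \<le> cmod (z - y)"
      using dist_out[OF wr(1)] z wr by auto
    have "cmod (F (Rt - R) z) \<le> measure \<mu> (Rt - R) / ?d"
      using F_bound(2)[OF _ dp ds] Rtb Rb by auto
    also have "\<dots> \<le> (1 / 4^n :: real) / (delta * (side lam n / 4))"
    proof (rule frac_le)
      show "0 \<le> (1 / 4 ^ n :: real)" by simp
      have "measure \<mu> (Rt - R) \<le> measure \<mu> Rt"
        using Rtb Rb sets_mu fin_all by (intro finite_measure.finite_measure_mono[OF fm]) auto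
      then show "measure \<mu> (Rt - R) \<le> 1 / 4 ^ n" using meas_sq[OF wt(1)] wt by simp
      show "0 < delta * (side lam n / 4)" using delta_pos side_pos[of n] by simp
      show "delta * (side lam n / 4) \<le> ?d" using side_ge[of n] delta_pos by (intro mult_left_mono) auto
    qed
    also have "\<dots> = 4 / delta * a_seq lam n" by (simp add: a_seq_def field_simps)
    finally show ?thesis by simp
  qed
  have b3: "cmod ((1 / measure \<mu> R) *\<^sub>R (LINT z:R|\<mu>. F (Rt - R) z) - 0) \<le> 4 / delta * a_seq lam n"
    by (rule avg[OF Rb mR si2]) (rule B3)
  have "cmod (S_rel \<mu> Q R - S_rel \<mu> Q Rt) \<le> C1 * a_seq lam n + C1 * a_seq lam n + 4 / delta * a_seq lam n"
    unfolding diff using b1 b2 b3 norm_triangle_ineq norm_triangle_ineq4 by (smt (verit))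
  then show ?thesis by (simp add: algebra_simps)
qed

end

theorem mainTheorem7:
  fixes \<Lambda> :: real
  assumes "1/4 \<le> \<Lambda>" and "\<Lambda> < 1/2"
  shows "\<exists>C>0. \<forall>lam :: nat \<Rightarrow> real. \<forall>\<mu> :: complex measure.
     (\<forall>n\<ge>1. 1/4 \<le> lam n \<and> lam n \<le> \<Lambda>) \<longrightarrow> cantor_measure lam \<mu> \<longrightarrow>
     ((\<forall>m n Q R. m < n \<longrightarrow> Q \<in> gen lam m \<longrightarrow> R \<in> gen lam n \<longrightarrow> R \<subseteq> Q \<longrightarrow>
         cmod (S_mart \<mu> (cantorK lam) R - S_mart \<mu> (cantorK lam) Q - S_rel \<mu> Q R)
           \<le> C * a_seq lam m) \<and>
      (\<forall>m n Q Rt R. m \<le> n \<longrightarrow> Q \<in> gen lam m \<longrightarrow> Rt \<in> gen lam n \<longrightarrow> R \<in> gen lam (Suc n) \<longrightarrow>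
         R \<subseteq> Rt \<longrightarrow> Rt \<subseteq> Q \<longrightarrow>
         cmod (S_rel \<mu> Q R - S_rel \<mu> Q Rt) \<le> C * a_seq lam n))"
proof -
  define C where "C = 2 * (2 / ((1 - 2 * \<Lambda>)^2 * (1 - 4 * \<Lambda>^2))) + 4 / (1 - 2 * \<Lambda>)"
  have d: "1 - 2 * \<Lambda> > 0" using assms by simp
  have "\<Lambda>^2 < (1/2)^2" using assms by (intro power_strict_mono) auto
  then have r: "1 - 4 * \<Lambda>^2 > 0" by (simp add: power2_eq_square)
  have Cp: "C > 0" unfolding C_def using d r by (intro add_pos_pos divide_pos_pos mult_pos_pos) auto
  show ?thesis
  proof (intro exI[of _ C] conjI allI impI Cp)
    fix lam :: "nat \<Rightarrow> real" and \<mu> :: "complex measure"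
    assume h: "\<forall>n\<ge>1. 1/4 \<le> lam n \<and> lam n \<le> \<Lambda>" and cm: "cantor_measure lam \<mu>"
    interpret measloc lam \<Lambda> \<mu>
      using h cm assms by unfold_locales auto
    have C1e: "C1 = 2 / ((1 - 2 * \<Lambda>)^2 * (1 - 4 * \<Lambda>^2))" by (simp add: C1_def r_def delta_def)
    have Ce: "C = 2 * C1 + 4 / delta" unfolding C_def C1e by (simp add: delta_def)
    have C1p: "C1 \<ge> 0" unfolding C1e using d r by simp
    have dp: "4 / delta \<ge> 0" using delta_pos by simp
    have ap: "\<And>k. a_seq lam k \<ge> 0" using side_pos by (simp add: a_seq_def less_imp_le)
    fix m n Q R
    {
      assume "m < n" "Q \<in> gen lam m" "R \<in> gen lam n" "R \<subseteq> Q"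
      then have "cmod (S_mart \<mu> (cantorK lam) R - S_mart \<mu> (cantorK lam) Q - S_rel \<mu> Q R) \<le> 2 * C1 * a_seq lam m"
        by (intro part1) auto
      also have "\<dots> \<le> C * a_seq lam m" unfolding Ce using ap[of m] dp by (intro mult_right_mono) auto
      finally show "cmod (S_mart \<mu> (cantorK lam) R - S_mart \<mu> (cantorK lam) Q - S_rel \<mu> Q R) \<le> C * a_seq lam m" .
    }
  next
    fix lam :: "nat \<Rightarrow> real" and \<mu> :: "complex measure"
    assume h: "\<forall>n\<ge>1. 1/4 \<le> lam n \<and> lam n \<le> \<Lambda>" and cm: "cantor_measure lam \<mu>"
    interpret measloc lam \<Lambda> \<mu>
      using h cm assms by unfold_locales auto
    have C1e: "C1 = 2 / ((1 - 2 * \<Lambda>)^2 * (1 - 4 * \<Lambda>^2))" by (simp add: C1_def r_def delta_def)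
    have Ce: "C = 2 * C1 + 4 / delta" unfolding C_def C1e by (simp add: delta_def)
    fix m n Q Rt R
    assume "m \<le> n" "Q \<in> gen lam m" "Rt \<in> gen lam n" "R \<in> gen lam (Suc n)" "R \<subseteq> Rt" "Rt \<subseteq> Q"
    then show "cmod (S_rel \<mu> Q R - S_rel \<mu> Q Rt) \<le> C * a_seq lam n"
      unfolding Ce by (intro part2) auto
  qed
qed

end
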